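(* Let $A=(a_{ij})\in\mathbb{R}^{n\times n}$ ($n\ge2$) be pseudo-diagonalizable and suppose there exists $k\in[n]$ such that $a_{kk}\ge0$ and $a_{ii}\le0$ for all $i\ne k$. Then $\lambda(A)=a_{kk}$ and $V(A)=\{\alpha\otimes A_k:\alpha\in\overline{\mathbb{R}}\}$, where $A_k$ is the $k$-th column of $A$.
   Context: Max-plus conventions: $\overline{\mathbb{R}}=\mathbb{R}\cup\{-\infty\}$, $\varepsilon=-\infty$, $\oplus=\max$, $\otimes=+$; $(A\otimes x)_i=\max_j(A_{ij}+x_j)$, $(\alpha\otimes x)_i=\alpha+x_i$. A matrix $P$ is invertible iff it has exactly one real entry in each row and column (others $\varepsilon$); $A,B$ are similar if $B=P^{-1}\otimes A\otimes P$ for invertible $P$. Pseudo-diagonal: real diagonal entries, off-diagonal entries equal to real $0$; pseudo-diagonalizable: similar to a pseudo-diagonal matrix. For finite $A$, $\lambda(A)$ is the maximum cycle mean $\max\{(a_{i_1i_2}+\dots+a_{i_{m-1}i_m}+a_{i_mi_1})/m\}$ over $m\ge1$ and distinct $i_1,\dots,i_m\in[n]$, which is the unique max-plus eigenvalue of $A$; $V(A)=\{x\in\overline{\mathbb{R}}^n: A\otimes x=\lambda(A)\otimes x\}$ is the eigenspace (containing the all-$\varepsilon$ vector). *)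

theory Defs
  imports Complex_Main "HOL-Library.Extended_Real"
begin

text \<open>Max-plus algebra over R-bar = R \<union> {-\<infinity>}, represented inside ereal
  by the elements different from PInfty. Indices range over a finite type 'n
  (so [n] corresponds to the elements of 'n, n = CARD('n)).\<close>

definition mp_mult :: "('a \<Rightarrow> 'b::finite \<Rightarrow> ereal) \<Rightarrow> ('b \<Rightarrow> 'c \<Rightarrow> ereal) \<Rightarrow> 'a \<Rightarrow> 'c \<Rightarrow> ereal" where
  "mp_mult P Q = (\<lambda>i j. Max (range (\<lambda>k. P i k + Q k j)))"

definition mp_mv :: "('a \<Rightarrow> 'b::finite \<Rightarrow> ereal) \<Rightarrow> ('b \<Rightarrow> ereal) \<Rightarrow> 'a \<Rightarrow> ereal" where
  "mp_mv A x = (\<lambda>i. Max (range (\<lambda>j. A i j + x j)))"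

definition mp_id :: "'n \<Rightarrow> 'n \<Rightarrow> ereal" where
  "mp_id = (\<lambda>i j. if i = j then 0 else -\<infinity>)"

definition mp_matrix :: "('n \<Rightarrow> 'm \<Rightarrow> ereal) \<Rightarrow> bool" where
  "mp_matrix P \<longleftrightarrow> (\<forall>i j. P i j \<noteq> \<infinity>)"

definition mp_invertible :: "('n \<Rightarrow> 'n \<Rightarrow> ereal) \<Rightarrow> bool" where
  "mp_invertible P \<longleftrightarrow> mp_matrix P \<and>
     (\<forall>i. \<exists>!j. P i j \<noteq> -\<infinity>) \<and> (\<forall>j. \<exists>!i. P i j \<noteq> -\<infinity>)"

text \<open>Similarity B = P^{-1} \<otimes> A \<otimes> P, where Q plays the role of P^{-1}
  (the two-sided max-plus inverse of P).\<close>
definition mp_similar :: "('n::finite \<Rightarrow> 'n \<Rightarrow> ereal) \<Rightarrow> ('n \<Rightarrow> 'n \<Rightarrow> ereal) \<Rightarrow> bool" where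
  "mp_similar A B \<longleftrightarrow> (\<exists>P Q. mp_invertible P \<and> mp_matrix Q \<and>
      mp_mult P Q = mp_id \<and> mp_mult Q P = mp_id \<and> B = mp_mult (mp_mult Q A) P)"

definition pseudo_diagonal :: "('n \<Rightarrow> 'n \<Rightarrow> ereal) \<Rightarrow> bool" where
  "pseudo_diagonal D \<longleftrightarrow> (\<forall>i. \<bar>D i i\<bar> \<noteq> \<infinity>) \<and> (\<forall>i j. i \<noteq> j \<longrightarrow> D i j = 0)"

definition pseudo_diagonalizable :: "('n::finite \<Rightarrow> 'n \<Rightarrow> real) \<Rightarrow> bool" where
  "pseudo_diagonalizable A \<longleftrightarrow>
     (\<exists>D. pseudo_diagonal D \<and> mp_similar (\<lambda>i j. ereal (A i j)) D)"

definition cycle_mean :: "('n \<Rightarrow> 'n \<Rightarrow> real) \<Rightarrow> 'n list \<Rightarrow> real" where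
  "cycle_mean A cs = (\<Sum>i<length cs. A (cs ! i) (cs ! ((i + 1) mod length cs))) / real (length cs)"

definition max_cycle_mean :: "('n::finite \<Rightarrow> 'n \<Rightarrow> real) \<Rightarrow> real" where
  "max_cycle_mean A = Max {cycle_mean A cs | cs. cs \<noteq> [] \<and> distinct cs}"

definition mp_eigenspace :: "('n::finite \<Rightarrow> 'n \<Rightarrow> real) \<Rightarrow> ('n \<Rightarrow> ereal) set" where
  "mp_eigenspace A = {x. (\<forall>i. x i \<noteq> \<infinity>) \<and>
     mp_mv (\<lambda>i j. ereal (A i j)) x = (\<lambda>i. ereal (max_cycle_mean A) + x i)}"

end

theory Submission
  imports Defs
begin

lemma max_single:
  fixes f :: "'a::finite \<Rightarrow> ereal"
  assumes "\<forall>k. k \<noteq> k0 \<longrightarrow> f k = -\<infinity>"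
  shows "Max (range f) = f k0"
proof (rule Max_eqI)
  show "finite (range f)" by simp
  show "\<And>y. y \<in> range f \<Longrightarrow> y \<le> f k0" using assms by auto
  show "f k0 \<in> range f" by simp
qed

lemma pd_structure:
  fixes A :: "'n::finite \<Rightarrow> 'n \<Rightarrow> real"
  assumes "pseudo_diagonalizable A"
  shows "\<exists>p. \<forall>a b. a \<noteq> b \<longrightarrow> A a b = p a - p b"
proof -
  define A' where "A' = (\<lambda>i j. ereal (A i j))"
  obtain D P Q where D: "pseudo_diagonal D" and Pinv: "mp_invertible P" and Qm: "mp_matrix Q"
    and PQ: "mp_mult P Q = mp_id" and Deq: "D = mp_mult (mp_mult Q A') P"
    using assms unfolding pseudo_diagonalizable_def mp_similar_def A'_def by blast
  have Pfin: "\<And>i j. P i j \<noteq> \<infinity>" using Pinv unfolding mp_invertible_def mp_matrix_def by blast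
  have Qfin: "\<And>i j. Q i j \<noteq> \<infinity>" using Qm unfolding mp_matrix_def by blast
  have row: "\<And>i. \<exists>!j. P i j \<noteq> -\<infinity>" using Pinv unfolding mp_invertible_def by blast
  have col: "\<And>l i j. P l j \<noteq> -\<infinity> \<Longrightarrow> P i j \<noteq> -\<infinity> \<Longrightarrow> l = i"
    using Pinv unfolding mp_invertible_def by blast
  obtain \<sigma> where sig: "\<And>i. P i (\<sigma> i) \<noteq> -\<infinity>" using row by metis
  have other: "\<And>i j. j \<noteq> \<sigma> i \<Longrightarrow> P i j = -\<infinity>" using row sig by metis
  define p where "p i = real_of_ereal (P i (\<sigma> i))" for i
  have Pp: "P i (\<sigma> i) = ereal (p i)" for i
    using sig[of i] Pfin[of i "\<sigma> i"] unfolding p_def by (cases "P i (\<sigma> i)") auto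
  have Qinv: "Q (\<sigma> a) a = ereal (- p a)" for a
  proof -
    have "mp_mult P Q a a = 0" using PQ by (simp add: mp_id_def)
    moreover have "mp_mult P Q a a = P a (\<sigma> a) + Q (\<sigma> a) a"
      unfolding mp_mult_def
      by (rule max_single) (use other Qfin in auto)
    ultimately have "ereal (p a) + Q (\<sigma> a) a = 0" using Pp by simp
    then show ?thesis using Qfin[of "\<sigma> a" a] by (cases "Q (\<sigma> a) a") auto
  qed
  have Qzero: "Q (\<sigma> a) m = -\<infinity>" if "a \<noteq> m" for a m
  proof -
    have "mp_mult P Q a m = -\<infinity>" using PQ that by (simp add: mp_id_def)
    moreover have "P a (\<sigma> a) + Q (\<sigma> a) m \<le> mp_mult P Q a m"
      unfolding mp_mult_def by (rule Max_ge) auto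
    ultimately have "ereal (p a) + Q (\<sigma> a) m \<le> -\<infinity>" using Pp by simp
    then show ?thesis by (cases "Q (\<sigma> a) m") auto
  qed
  have QA: "mp_mult Q A' (\<sigma> a) l = ereal (- p a + A a l)" for a l
  proof -
    have "mp_mult Q A' (\<sigma> a) l = Q (\<sigma> a) a + A' a l"
      unfolding mp_mult_def
      by (rule max_single) (use Qzero A'_def in auto)
    then show ?thesis using Qinv A'_def by simp
  qed
  have Dab: "D (\<sigma> a) (\<sigma> b) = ereal (- p a + A a b + p b)" for a b
  proof -
    have "D (\<sigma> a) (\<sigma> b) = Max (range (\<lambda>l. mp_mult Q A' (\<sigma> a) l + P l (\<sigma> b)))"
      unfolding Deq by (subst mp_mult_def[of "mp_mult Q A'" P]) (rule refl)
    also have "\<dots> = mp_mult Q A' (\<sigma> a) b + P b (\<sigma> b)"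
    proof (rule max_single, intro allI impI)
      fix l assume "l \<noteq> b"
      then have "P l (\<sigma> b) = -\<infinity>" using col[of l "\<sigma> b" b] sig[of b] by blast
      then show "mp_mult Q A' (\<sigma> a) l + P l (\<sigma> b) = -\<infinity>" using QA by simp
    qed
    finally show ?thesis using QA Pp by simp
  qed
  have "\<forall>a b. a \<noteq> b \<longrightarrow> A a b = p a - p b"
  proof (intro allI impI)
    fix a b :: 'n assume ab: "a \<noteq> b"
    then have "\<sigma> a \<noteq> \<sigma> b" using col sig by metis
    then have "D (\<sigma> a) (\<sigma> b) = 0" using D unfolding pseudo_diagonal_def by blast
    then show "A a b = p a - p b" using Dab[of a b] by (simp add: zero_ereal_def)
  qed
  then show ?thesis by blast
qed

lemma telescope_mod:
  fixes f :: "nat \<Rightarrow> real"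
  shows "(\<Sum>i<m. f ((i+1) mod m)) = (\<Sum>i<m. f i)"
proof (cases m)
  case 0 then show ?thesis by simp
next
  case (Suc n)
  have "(\<Sum>i<Suc n. f ((i+1) mod Suc n)) = (\<Sum>i<n. f ((i+1) mod Suc n)) + f 0"
    by (simp add: sum.lessThan_Suc)
  also have "(\<Sum>i<n. f ((i+1) mod Suc n)) = (\<Sum>i<n. f (Suc i))"
    by (rule sum.cong) auto
  also have "(\<Sum>i<n. f (Suc i)) + f 0 = (\<Sum>i<Suc n. f i)"
    by (subst sum.lessThan_Suc_shift) simp
  finally show ?thesis using Suc by simp
qed

lemma cycle_le:
  fixes A :: "'n::finite \<Rightarrow> 'n \<Rightarrow> real"
  assumes p: "\<forall>a b. a \<noteq> b \<longrightarrow> A a b = p a - p b"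
    and kk: "A k k \<ge> 0" and oth: "\<forall>i. i \<noteq> k \<longrightarrow> A i i \<le> 0"
    and cs: "cs \<noteq> []" "distinct cs"
  shows "cycle_mean A cs \<le> A k k"
proof (cases "length cs = 1")
  case True
  then obtain c where "cs = [c]" by (cases cs) auto
  then show ?thesis using kk oth by (cases "c = k") (auto simp: cycle_mean_def)
next
  case False
  define m where "m = length cs"
  have "length cs \<noteq> 0" using cs by simp
  then have m2: "m \<ge> 2" using False m_def by linarith
  have ne: "cs ! i \<noteq> cs ! ((i+1) mod m)" if "i < m" for i
  proof -
    have "i \<noteq> (i+1) mod m"
    proof (cases "i + 1 < m")
      case True then show ?thesis by simp
    next
      case False
      then have "i + 1 = m" using that by simp
      then show ?thesis using m2 by auto
    qed
    moreover have "(i+1) mod m < m" using m2 by simp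
    ultimately show ?thesis using cs(2) that m_def by (simp add: nth_eq_iff_index_eq)
  qed
  have "(\<Sum>i<m. A (cs ! i) (cs ! ((i + 1) mod m)))
      = (\<Sum>i<m. p (cs ! i) - p (cs ! ((i + 1) mod m)))"
    by (rule sum.cong) (use ne p in auto)
  also have "\<dots> = 0"
    using telescope_mod[of "\<lambda>i. p (cs ! i)" m] by (simp add: sum_subtractf)
  finally show ?thesis using kk unfolding cycle_mean_def m_def by simp
qed

lemma mcm:
  fixes A :: "'n::finite \<Rightarrow> 'n \<Rightarrow> real"
  assumes p: "\<forall>a b. a \<noteq> b \<longrightarrow> A a b = p a - p b"
    and kk: "A k k \<ge> 0" and oth: "\<forall>i. i \<noteq> k \<longrightarrow> A i i \<le> 0"
  shows "max_cycle_mean A = A k k"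
  unfolding max_cycle_mean_def
proof (rule Max_eqI)
  have "{cycle_mean A cs | cs. cs \<noteq> [] \<and> distinct cs}
        \<subseteq> cycle_mean A ` {xs. set xs \<subseteq> UNIV \<and> distinct xs}" by auto
  moreover have "finite {xs::'n list. set xs \<subseteq> UNIV \<and> distinct xs}"
    by (rule finite_subset_distinct) simp
  ultimately show "finite {cycle_mean A cs | cs. cs \<noteq> [] \<and> distinct cs}"
    using finite_subset by blast
  show "\<And>y. y \<in> {cycle_mean A cs | cs. cs \<noteq> [] \<and> distinct cs} \<Longrightarrow> y \<le> A k k"
    using cycle_le[OF p kk oth] by blast
  have "cycle_mean A [k] = A k k" by (simp add: cycle_mean_def)
  then show "A k k \<in> {cycle_mean A cs | cs. cs \<noteq> [] \<and> distinct cs}"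
    by (metis (mono_tags, lifting) distinct_singleton list.distinct(1) mem_Collect_eq)
qed

lemma keyineq:
  fixes A :: "'n \<Rightarrow> 'n \<Rightarrow> real"
  assumes p: "\<forall>a b. a \<noteq> b \<longrightarrow> A a b = p a - p b"
    and kk: "A k k \<ge> 0" and oth: "\<forall>i. i \<noteq> k \<longrightarrow> A i i \<le> 0"
  shows "A a j + A j k \<le> A k k + A a k"
proof (cases "a = k")
  case True
  then show ?thesis using p kk by (cases "j = k") auto
next
  case False
  then show ?thesis using p kk oth by (cases "j = k"; cases "j = a") auto
qed

lemma real_core:
  fixes A :: "'n::finite \<Rightarrow> 'n \<Rightarrow> real" and r :: "'n \<Rightarrow> real"
  assumes card: "card (UNIV :: 'n set) \<ge> 2"
    and p: "\<forall>a b. a \<noteq> b \<longrightarrow> A a b = p a - p b"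
    and kk: "A k k \<ge> 0" and oth: "\<forall>i. i \<noteq> k \<longrightarrow> A i i \<le> 0"
    and le: "\<And>a j. A a j + r j \<le> A k k + r a"
    and att: "\<And>a. \<exists>j. A a j + r j = A k k + r a"
  shows "r i = r k - A k k + A i k"
proof (cases "i = k")
  case True then show ?thesis by simp
next
  case ik: False
  have ge: "r i \<ge> r k - A k k + A i k" using le[of i k] by simp
  have "r i \<le> r k - A k k + A i k"
  proof (cases "A k k = 0")
    case True
    then show ?thesis using le[of k i] p ik by auto
  next
    case False
    then have kpos: "A k k > 0" using kk by simp
    define s where "s j = r j - A j k" for j
    have fin: "finite (s ` (UNIV - {k}))" by simp
    have ne: "s ` (UNIV - {k}) \<noteq> {}" using ik by auto
    have "Max (s ` (UNIV - {k})) \<in> s ` (UNIV - {k})" using Max_in[OF fin ne] .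
    then obtain i0 where i0': "i0 \<in> UNIV - {k}" and i0'': "Max (s ` (UNIV - {k})) = s i0"
      by (rule imageE)
    have i0: "i0 \<noteq> k" "s i0 = Max (s ` (UNIV - {k}))" using i0' i0'' by auto
    have i0max: "\<And>j. j \<noteq> k \<Longrightarrow> s j \<le> s i0"
      using i0 fin by auto
    obtain j where j: "A i0 j + r j = A k k + r i0" using att by blast
    have "s i0 = r k - A k k"
    proof -
      consider "j = i0" | "j = k" | "j \<noteq> i0 \<and> j \<noteq> k" by blast
      then show ?thesis
      proof cases
        case 1 then show ?thesis using j oth i0 kpos by force
      next
        case 2 then show ?thesis using j unfolding s_def by simp
      next
        case 3
        then have "s j = A k k + s i0" using j p i0 unfolding s_def by auto
        then show ?thesis using i0max[of j] 3 kpos by simp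
      qed
    qed
    then show ?thesis using i0max[OF ik] unfolding s_def by simp
  qed
  then show ?thesis using ge by simp
qed

theorem corollary4p20:
  fixes A :: "'n::finite \<Rightarrow> 'n \<Rightarrow> real" and k :: 'n
  assumes "card (UNIV :: 'n set) \<ge> 2"
    and "pseudo_diagonalizable A"
    and "A k k \<ge> 0"
    and "\<forall>i. i \<noteq> k \<longrightarrow> A i i \<le> 0"
  shows "max_cycle_mean A = A k k \<and>
         mp_eigenspace A = {x. \<exists>\<alpha>::ereal. \<alpha> \<noteq> \<infinity> \<and> x = (\<lambda>i. \<alpha> + ereal (A i k))}"
proof -
  obtain p where p: "\<forall>a b. a \<noteq> b \<longrightarrow> A a b = p a - p b"
    using pd_structure[OF assms(2)] by blast
  have lam: "max_cycle_mean A = A k k" using mcm[OF p assms(3,4)] .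
  have key: "\<And>a j. A a j + A j k \<le> A k k + A a k" using keyineq[OF p assms(3,4)] .
  have "mp_eigenspace A = {x. \<exists>\<alpha>::ereal. \<alpha> \<noteq> \<infinity> \<and> x = (\<lambda>i. \<alpha> + ereal (A i k))}"
  proof (rule set_eqI, rule iffI)
    fix u assume "u \<in> mp_eigenspace A"
    then have mem: "(\<forall>i. u i \<noteq> \<infinity>) \<and>
        mp_mv (\<lambda>i j. ereal (A i j)) u = (\<lambda>i. ereal (max_cycle_mean A) + u i)"
      unfolding mp_eigenspace_def by simp
    then have ufin: "\<And>i. u i \<noteq> \<infinity>" by blast
    have eq: "Max (range (\<lambda>j. ereal (A a j) + u j)) = ereal (A k k) + u a" for a
    proof -
      have "mp_mv (\<lambda>i j. ereal (A i j)) u a = ereal (max_cycle_mean A) + u a"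
        using mem by simp
      then show ?thesis unfolding mp_mv_def lam .
    qed
    have ineq: "ereal (A a j) + u j \<le> ereal (A k k) + u a" for a j
    proof -
      have "ereal (A a j) + u j \<le> Max (range (\<lambda>j. ereal (A a j) + u j))"
        by (rule Max_ge) auto
      then show ?thesis using eq[of a] by simp
    qed
    show "u \<in> {x. \<exists>\<alpha>::ereal. \<alpha> \<noteq> \<infinity> \<and> x = (\<lambda>i. \<alpha> + ereal (A i k))}"
    proof (cases "u k = -\<infinity>")
      case True
      have "u i = -\<infinity>" for i using ineq[of k i] True by (cases "u i") auto
      then show ?thesis by (intro CollectI exI[of _ "-\<infinity>"]) auto
    next
      case False
      have nm: "u i \<noteq> -\<infinity>" for i using ineq[of i k] False ufin[of k] by (cases "u k") auto
      define r where "r i = real_of_ereal (u i)" for i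
      have ur: "u i = ereal (r i)" for i using nm[of i] ufin[of i] unfolding r_def by (cases "u i") auto
      have le: "A a j + r j \<le> A k k + r a" for a j using ineq[of a j] by (simp add: ur)
      have att: "\<exists>j. A a j + r j = A k k + r a" for a
      proof -
        have "Max (range (\<lambda>j. ereal (A a j) + u j)) \<in> range (\<lambda>j. ereal (A a j) + u j)"
          by (rule Max_in) auto
        then obtain j where jj: "Max (range (\<lambda>j. ereal (A a j) + u j)) = ereal (A a j) + u j"
          by (rule imageE)
        have "ereal (A k k) + u a = ereal (A a j) + u j" using eq[of a] jj by (rule subst)
        then have "A a j + r j = A k k + r a" unfolding ur by simp
        then show ?thesis by blast
      qed
      have rr: "r i = r k - A k k + A i k" for i using real_core[OF assms(1) p assms(3,4) le att] .
      have "u = (\<lambda>i. ereal (r k - A k k) + ereal (A i k))"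
      proof
        fix i
        show "u i = ereal (r k - A k k) + ereal (A i k)"
          unfolding ur[of i] using rr[of i] by simp
      qed
      then show ?thesis unfolding mem_Collect_eq by (intro exI[of _ "ereal (r k - A k k)"] conjI) simp_all
    qed
  next
    fix u assume "u \<in> {x. \<exists>\<alpha>::ereal. \<alpha> \<noteq> \<infinity> \<and> x = (\<lambda>i. \<alpha> + ereal (A i k))}"
    then obtain \<alpha> where a: "\<alpha> \<noteq> \<infinity>" and u: "u = (\<lambda>i. \<alpha> + ereal (A i k))" by blast
    show "u \<in> mp_eigenspace A"
      unfolding mp_eigenspace_def mp_mv_def lam
    proof (intro CollectI conjI allI ext)
      fix i show "u i \<noteq> \<infinity>" using a u by (cases \<alpha>) auto
    next
      fix a
      show "Max (range (\<lambda>j. ereal (A a j) + u j)) = ereal (A k k) + u a"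
      proof (cases \<alpha>)
        case (real r)
        show ?thesis
        proof (rule Max_eqI)
          show "finite (range (\<lambda>j. ereal (A a j) + u j))" by simp
          show "y \<le> ereal (A k k) + u a" if yin: "y \<in> range (\<lambda>j. ereal (A a j) + u j)" for y
          proof -
            obtain j where y: "y = ereal (A a j) + u j" using yin by blast
            have "A a j + (r + A j k) \<le> A k k + (r + A a k)" using key[of a j] by simp
            then show ?thesis unfolding y u real by simp
          qed
          show "ereal (A k k) + u a \<in> range (\<lambda>j. ereal (A a j) + u j)"
            unfolding u real by (rule image_eqI[of _ _ k]) auto
        qed
      next
        case PInf then show ?thesis using a by simp
      next
        case MInf then show ?thesis unfolding u by simp
      qed
    qed
  qed
  then show ?thesis using lam by simp
qed

end
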